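(* Let $R$ be a unital ring and let $(P,Q,\psi)$ be a unital $R$-system. Suppose that $(S,T,\sigma,B)$ is a semi-full covariant representation of $(P,Q,\psi)$, that $(P,Q,\psi)$ satisfies Condition (FS'), and that the ideal $I^{(k)}_{\psi,\sigma}$ of $B_0$ is unital (has a multiplicative identity) for every $k\ge0$. Then $B$ is epsilon-strongly $\mathbb{Z}$-graded.
   Context: For additive subsets $X,Y$ of a ring, $XY$ is the additive subgroup generated by products $xy$. For rings $A,B$, an $A$-$B$-bimodule $M$ is unital if there exist $a\in A,b\in B$ with $ax=x=xb$ for all $x\in M$. A $\mathbb{Z}$-graded ring $B=\bigoplus_iB_i$ is epsilon-strongly graded if each $B_i$ is a unital $B_iB_{-i}$-$B_{-i}B_i$-bimodule. An $R$-system is a triple $(P,Q,\psi)$ with $P,Q$ $R$-bimodules and $\psi:P\otimes_RQ\to R$ an $R$-bimodule homomorphism; it is unital if $R$ is unital and $1_R$ acts as identity on both sides of $P$ and $Q$. Put $P^{\otimes0}=Q^{\otimes0}=R$, $\psi_0(r\otimes r')=rr'$, $\psi_1=\psi$, and for $n>1$: $Q^{\otimes n}=Q^{\otimes(n-1)}\otimes_RQ$, $P^{\otimes n}=P\otimes_RP^{\otimes(n-1)}$, $\psi_n((p_1\otimes p_2)\otimes(q_2\otimes q_1))=\psi(p_1\psi_{n-1}(p_2\otimes q_2)\otimes q_1)$. A covariant representation is a tuple $(S,T,\sigma,B)$ with $B$ a ring, $S:P\to B$, $T:Q\to B$ additive maps, $\sigma:R\to B$ a ring homomorphism, with $S(pr)=S(p)\sigma(r)$,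 $S(rp)=\sigma(r)S(p)$, $T(qr)=T(q)\sigma(r)$, $T(rq)=\sigma(r)T(q)$, $\sigma(\psi(p\otimes q))=S(p)T(q)$. It is graded if $B$ is generated as a ring by $\sigma(R)\cup S(P)\cup T(Q)$ and $B$ carries a $\mathbb{Z}$-grading with $\sigma(R)\subseteq B_0$, $T(Q)\subseteq B_1$, $S(P)\subseteq B_{-1}$. For a graded covariant representation and $k\ge0$, $I^{(k)}_{\psi,\sigma}$ is the ideal of $B_0$ generated by $\{\sigma(\psi_k(p\otimes q)):p\in P^{\otimes k},q\in Q^{\otimes k}\}$; the (graded) representation is semi-full if $B_{-k}B_k=I^{(k)}_{\psi,\sigma}$ for all $k\ge0$. For $q\in Q,p\in P$ let $\theta_{q,p}(x)=q\psi(p\otimes x)$ ($x\in Q$) and $\theta_{p,q}(y)=\psi(y\otimes q)p$ ($y\in P$); $\mathcal{F}_P(Q)$, $\mathcal{F}_Q(P)$ are the additive groups generated by these maps. Condition (FS'): there exist $\Theta\in\mathcal{F}_P(Q)$, $\Phi\in\mathcal{F}_Q(P)$ with $\Theta(q)=q$ and $\Phi(p)=p$ for all $q\in Q,p\in P$. *)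

theory Defs
  imports Main
begin

inductive_set add_span :: "'a::ab_group_add set \<Rightarrow> 'a set" for G where
  add_span_gen: "x \<in> G \<Longrightarrow> x \<in> add_span G"
| add_span_zero: "0 \<in> add_span G"
| add_span_add: "x \<in> add_span G \<Longrightarrow> y \<in> add_span G \<Longrightarrow> x + y \<in> add_span G"
| add_span_neg: "x \<in> add_span G \<Longrightarrow> - x \<in> add_span G"

definition set_prod :: "'b::ring set \<Rightarrow> 'b set \<Rightarrow> 'b set" where
  "set_prod X Y = add_span {x * y | x y. x \<in> X \<and> y \<in> Y}"

inductive_set subring_gen :: "'b::ring set \<Rightarrow> 'b set" for G where
  subring_gen_gen: "x \<in> G \<Longrightarrow> x \<in> subring_gen G"
| subring_gen_zero: "0 \<in> subring_gen G"
| subring_gen_add: "x \<in> subring_gen G \<Longrightarrow> y \<in> subring_gen G \<Longrightarrow> x + y \<in> subring_gen G"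
| subring_gen_neg: "x \<in> subring_gen G \<Longrightarrow> - x \<in> subring_gen G"
| subring_gen_mult: "x \<in> subring_gen G \<Longrightarrow> y \<in> subring_gen G \<Longrightarrow> x * y \<in> subring_gen G"

inductive_set ideal_gen :: "'b::ring set \<Rightarrow> 'b set \<Rightarrow> 'b set" for A G where
  ideal_gen_gen: "x \<in> G \<Longrightarrow> x \<in> ideal_gen A G"
| ideal_gen_zero: "0 \<in> ideal_gen A G"
| ideal_gen_add: "x \<in> ideal_gen A G \<Longrightarrow> y \<in> ideal_gen A G \<Longrightarrow> x + y \<in> ideal_gen A G"
| ideal_gen_neg: "x \<in> ideal_gen A G \<Longrightarrow> - x \<in> ideal_gen A G"
| ideal_gen_lmult: "a \<in> A \<Longrightarrow> x \<in> ideal_gen A G \<Longrightarrow> a * x \<in> ideal_gen A G"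
| ideal_gen_rmult: "a \<in> A \<Longrightarrow> x \<in> ideal_gen A G \<Longrightarrow> x * a \<in> ideal_gen A G"

definition has_unit :: "'b::ring set \<Rightarrow> bool" where
  "has_unit I \<longleftrightarrow> (\<exists>e\<in>I. \<forall>x\<in>I. e * x = x \<and> x * e = x)"

(* B (the whole type 'b) is the internal direct sum of the additive subgroups Bg i,
   with Bg i * Bg j \<subseteq> Bg (i + j) *)
definition Z_graded :: "(int \<Rightarrow> 'b::ring set) \<Rightarrow> bool" where
  "Z_graded Bg \<longleftrightarrow>
     (\<forall>i. 0 \<in> Bg i \<and> (\<forall>x\<in>Bg i. \<forall>y\<in>Bg i. x + y \<in> Bg i) \<and> (\<forall>x\<in>Bg i. - x \<in> Bg i)) \<and>
     (\<forall>i j x y. x \<in> Bg i \<longrightarrow> y \<in> Bg j \<longrightarrow> x * y \<in> Bg (i + j)) \<and>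
     (\<forall>b. \<exists>c. finite {i. c i \<noteq> 0} \<and> (\<forall>i. c i \<in> Bg i) \<and> b = sum c {i. c i \<noteq> 0}) \<and>
     (\<forall>c. finite {i. c i \<noteq> 0} \<longrightarrow> (\<forall>i. c i \<in> Bg i) \<longrightarrow> sum c {i. c i \<noteq> 0} = 0
          \<longrightarrow> (\<forall>i. c i = 0))"

(* each B_i is a unital B_i B_{-i} - B_{-i} B_i bimodule *)
definition epsilon_strongly_graded :: "(int \<Rightarrow> 'b::ring set) \<Rightarrow> bool" where
  "epsilon_strongly_graded Bg \<longleftrightarrow> Z_graded Bg \<and>
     (\<forall>i. \<exists>a\<in>set_prod (Bg i) (Bg (- i)). \<exists>b\<in>set_prod (Bg (- i)) (Bg i).
            \<forall>x\<in>Bg i. a * x = x \<and> x * b = x)"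

definition bimodule :: "('r::ring_1 \<Rightarrow> 'm::ab_group_add \<Rightarrow> 'm) \<Rightarrow> ('m \<Rightarrow> 'r \<Rightarrow> 'm) \<Rightarrow> bool" where
  "bimodule l r \<longleftrightarrow>
     (\<forall>a x y. l a (x + y) = l a x + l a y) \<and> (\<forall>a b x. l (a + b) x = l a x + l b x) \<and>
     (\<forall>a b x. l (a * b) x = l a (l b x)) \<and>
     (\<forall>a x y. r (x + y) a = r x a + r y a) \<and> (\<forall>a b x. r x (a + b) = r x a + r x b) \<and>
     (\<forall>a b x. r x (a * b) = r (r x a) b) \<and>
     (\<forall>a b x. l a (r x b) = r (l a x) b)"

definition unital_bimodule :: "('r::ring_1 \<Rightarrow> 'm::ab_group_add \<Rightarrow> 'm) \<Rightarrow> ('m \<Rightarrow> 'r \<Rightarrow> 'm) \<Rightarrow> bool" where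
  "unital_bimodule l r \<longleftrightarrow> bimodule l r \<and> (\<forall>x. l 1 x = x) \<and> (\<forall>x. r x 1 = x)"

(* psi : P \<otimes>_R Q \<rightarrow> R an R-bimodule homomorphism, represented (universal property of
   the balanced tensor product) as an R-balanced biadditive map P \<times> Q \<rightarrow> R that is
   left R-linear in P and right R-linear in Q *)
definition balanced_bimod_map ::
  "('r::ring_1 \<Rightarrow> 'p::ab_group_add \<Rightarrow> 'p) \<Rightarrow> ('p \<Rightarrow> 'r \<Rightarrow> 'p) \<Rightarrow>
   ('r \<Rightarrow> 'q::ab_group_add \<Rightarrow> 'q) \<Rightarrow> ('q \<Rightarrow> 'r \<Rightarrow> 'q) \<Rightarrow> ('p \<Rightarrow> 'q \<Rightarrow> 'r) \<Rightarrow> bool" where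
  "balanced_bimod_map lP rP lQ rQ \<psi> \<longleftrightarrow>
     (\<forall>p p' q. \<psi> (p + p') q = \<psi> p q + \<psi> p' q) \<and>
     (\<forall>p q q'. \<psi> p (q + q') = \<psi> p q + \<psi> p q') \<and>
     (\<forall>p a q. \<psi> (rP p a) q = \<psi> p (lQ a q)) \<and>
     (\<forall>a p q. \<psi> (lP a p) q = a * \<psi> p q) \<and>
     (\<forall>p q a. \<psi> p (rQ q a) = \<psi> p q * a)"

definition unital_R_system ::
  "('r::ring_1 \<Rightarrow> 'p::ab_group_add \<Rightarrow> 'p) \<Rightarrow> ('p \<Rightarrow> 'r \<Rightarrow> 'p) \<Rightarrow>
   ('r \<Rightarrow> 'q::ab_group_add \<Rightarrow> 'q) \<Rightarrow> ('q \<Rightarrow> 'r \<Rightarrow> 'q) \<Rightarrow> ('p \<Rightarrow> 'q \<Rightarrow> 'r) \<Rightarrow> bool" where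
  "unital_R_system lP rP lQ rQ \<psi> \<longleftrightarrow>
     unital_bimodule lP rP \<and> unital_bimodule lQ rQ \<and> balanced_bimod_map lP rP lQ rQ \<psi>"

(* psi_n on elementary tensors: for p = p_1 \<otimes> (p_2 \<otimes> ... \<otimes> p_n) and
   q = (q_n \<otimes> ... \<otimes> q_2) \<otimes> q_1 (lists [p_1,...,p_n], [q_1,...,q_n]):
   psi_1(p_1 \<otimes> q_1) = psi(p_1 \<otimes> q_1),
   psi_n = psi(p_1 psi_{n-1}(p_2... \<otimes> q_2...) \<otimes> q_1) *)
fun psi_elem :: "('p \<Rightarrow> 'r \<Rightarrow> 'p) \<Rightarrow> ('p \<Rightarrow> 'q \<Rightarrow> 'r) \<Rightarrow> 'p list \<Rightarrow> 'q list \<Rightarrow> 'r" where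
  "psi_elem rP \<psi> [p] [q] = \<psi> p q"
| "psi_elem rP \<psi> (p # ps) (q # qs) = \<psi> (rP p (psi_elem rP \<psi> ps qs)) q"
| "psi_elem rP \<psi> _ _ = undefined"

(* generators of I^{(k)}: the sigma-images of psi_k on (elementary) tensors;
   k = 0: psi_0(r \<otimes> r') = r r' *)
definition psi_gens :: "('p \<Rightarrow> 'r::ring_1 \<Rightarrow> 'p) \<Rightarrow> ('p \<Rightarrow> 'q \<Rightarrow> 'r) \<Rightarrow> nat \<Rightarrow> 'r set" where
  "psi_gens rP \<psi> k =
     (if k = 0 then {r * r' | r r'. True}
      else {psi_elem rP \<psi> ps qs | ps qs. length ps = k \<and> length qs = k})"

definition I_psi_sigma ::
  "(int \<Rightarrow> 'b::ring set) \<Rightarrow> ('r::ring_1 \<Rightarrow> 'b) \<Rightarrow> ('p \<Rightarrow> 'r \<Rightarrow> 'p) \<Rightarrow> ('p \<Rightarrow> 'q \<Rightarrow> 'r) \<Rightarrow> nat \<Rightarrow> 'b set" where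
  "I_psi_sigma Bg \<sigma> rP \<psi> k = ideal_gen (Bg 0) (\<sigma> ` psi_gens rP \<psi> k)"

definition covariant_rep ::
  "('r::ring_1 \<Rightarrow> 'p::ab_group_add \<Rightarrow> 'p) \<Rightarrow> ('p \<Rightarrow> 'r \<Rightarrow> 'p) \<Rightarrow>
   ('r \<Rightarrow> 'q::ab_group_add \<Rightarrow> 'q) \<Rightarrow> ('q \<Rightarrow> 'r \<Rightarrow> 'q) \<Rightarrow> ('p \<Rightarrow> 'q \<Rightarrow> 'r) \<Rightarrow>
   ('p \<Rightarrow> 'b::ring) \<Rightarrow> ('q \<Rightarrow> 'b) \<Rightarrow> ('r \<Rightarrow> 'b) \<Rightarrow> bool" where
  "covariant_rep lP rP lQ rQ \<psi> S T \<sigma> \<longleftrightarrow>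
     (\<forall>p p'. S (p + p') = S p + S p') \<and>
     (\<forall>q q'. T (q + q') = T q + T q') \<and>
     (\<forall>a b. \<sigma> (a + b) = \<sigma> a + \<sigma> b) \<and> (\<forall>a b. \<sigma> (a * b) = \<sigma> a * \<sigma> b) \<and>
     (\<forall>p a. S (rP p a) = S p * \<sigma> a) \<and> (\<forall>a p. S (lP a p) = \<sigma> a * S p) \<and>
     (\<forall>q a. T (rQ q a) = T q * \<sigma> a) \<and> (\<forall>a q. T (lQ a q) = \<sigma> a * T q) \<and>
     (\<forall>p q. \<sigma> (\<psi> p q) = S p * T q)"

(* graded covariant representation; the ring B is the whole type 'b *)
definition graded_covariant_rep ::
  "('r::ring_1 \<Rightarrow> 'p::ab_group_add \<Rightarrow> 'p) \<Rightarrow> ('p \<Rightarrow> 'r \<Rightarrow> 'p) \<Rightarrow>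
   ('r \<Rightarrow> 'q::ab_group_add \<Rightarrow> 'q) \<Rightarrow> ('q \<Rightarrow> 'r \<Rightarrow> 'q) \<Rightarrow> ('p \<Rightarrow> 'q \<Rightarrow> 'r) \<Rightarrow>
   ('p \<Rightarrow> 'b::ring) \<Rightarrow> ('q \<Rightarrow> 'b) \<Rightarrow> ('r \<Rightarrow> 'b) \<Rightarrow> (int \<Rightarrow> 'b set) \<Rightarrow> bool" where
  "graded_covariant_rep lP rP lQ rQ \<psi> S T \<sigma> Bg \<longleftrightarrow>
     covariant_rep lP rP lQ rQ \<psi> S T \<sigma> \<and>
     subring_gen (range \<sigma> \<union> range S \<union> range T) = UNIV \<and>
     Z_graded Bg \<and>
     range \<sigma> \<subseteq> Bg 0 \<and> range T \<subseteq> Bg 1 \<and> range S \<subseteq> Bg (-1)"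

definition semi_full_rep ::
  "('r::ring_1 \<Rightarrow> 'p::ab_group_add \<Rightarrow> 'p) \<Rightarrow> ('p \<Rightarrow> 'r \<Rightarrow> 'p) \<Rightarrow>
   ('r \<Rightarrow> 'q::ab_group_add \<Rightarrow> 'q) \<Rightarrow> ('q \<Rightarrow> 'r \<Rightarrow> 'q) \<Rightarrow> ('p \<Rightarrow> 'q \<Rightarrow> 'r) \<Rightarrow>
   ('p \<Rightarrow> 'b::ring) \<Rightarrow> ('q \<Rightarrow> 'b) \<Rightarrow> ('r \<Rightarrow> 'b) \<Rightarrow> (int \<Rightarrow> 'b set) \<Rightarrow> bool" where
  "semi_full_rep lP rP lQ rQ \<psi> S T \<sigma> Bg \<longleftrightarrow>
     graded_covariant_rep lP rP lQ rQ \<psi> S T \<sigma> Bg \<and>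
     (\<forall>k::nat. set_prod (Bg (- int k)) (Bg (int k)) = I_psi_sigma Bg \<sigma> rP \<psi> k)"

inductive_set fun_span :: "('a \<Rightarrow> 'm::ab_group_add) set \<Rightarrow> ('a \<Rightarrow> 'm) set" for G where
  fun_span_gen: "f \<in> G \<Longrightarrow> f \<in> fun_span G"
| fun_span_zero: "(\<lambda>_. 0) \<in> fun_span G"
| fun_span_add: "f \<in> fun_span G \<Longrightarrow> g \<in> fun_span G \<Longrightarrow> (\<lambda>x. f x + g x) \<in> fun_span G"
| fun_span_neg: "f \<in> fun_span G \<Longrightarrow> (\<lambda>x. - f x) \<in> fun_span G"

definition F_P_Q :: "('q \<Rightarrow> 'r \<Rightarrow> 'q::ab_group_add) \<Rightarrow> ('p \<Rightarrow> 'q \<Rightarrow> 'r) \<Rightarrow> ('q \<Rightarrow> 'q) set" where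
  "F_P_Q rQ \<psi> = fun_span {(\<lambda>x. rQ q (\<psi> p x)) | q p. True}"

definition F_Q_P :: "('r \<Rightarrow> 'p::ab_group_add \<Rightarrow> 'p) \<Rightarrow> ('p \<Rightarrow> 'q \<Rightarrow> 'r) \<Rightarrow> ('p \<Rightarrow> 'p) set" where
  "F_Q_P lP \<psi> = fun_span {(\<lambda>y. lP (\<psi> y q) p) | p q. True}"

definition condition_FS' ::
  "('r \<Rightarrow> 'p::ab_group_add \<Rightarrow> 'p) \<Rightarrow> ('q \<Rightarrow> 'r \<Rightarrow> 'q::ab_group_add) \<Rightarrow> ('p \<Rightarrow> 'q \<Rightarrow> 'r) \<Rightarrow> bool" where
  "condition_FS' lP rQ \<psi> \<longleftrightarrow>
     (\<exists>\<Theta>\<in>F_P_Q rQ \<psi>. \<exists>\<Phi>\<in>F_Q_P lP \<psi>. (\<forall>q. \<Theta> q = q) \<and> (\<forall>p. \<Phi> p = p))"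

end

theory Submission
  imports Defs
begin


lemma Zg_facts:
  assumes "Z_graded Bg"
  shows Zg_zero: "0 \<in> Bg i" and Zg_add: "x \<in> Bg i \<Longrightarrow> y \<in> Bg i \<Longrightarrow> x + y \<in> Bg i"
    and Zg_neg: "x \<in> Bg i \<Longrightarrow> - x \<in> Bg i"
    and Zg_mult: "x \<in> Bg i \<Longrightarrow> y \<in> Bg j \<Longrightarrow> x * y \<in> Bg (i + j)"
  using assms unfolding Z_graded_def by blast+

lemma Zg_unique:
  assumes "Z_graded Bg" "finite {i. c i \<noteq> 0}" "\<And>i. c i \<in> Bg i" "sum c {i. c i \<noteq> 0} = 0"
  shows "c i = 0"
  using assms unfolding Z_graded_def by blast

lemma add_span_sub: "x \<in> add_span G \<Longrightarrow> (\<And>g. g \<in> G \<Longrightarrow> g \<in> add_span H) \<Longrightarrow> x \<in> add_span H"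
  by (induction rule: add_span.induct) (auto intro: add_span.intros)

lemma add_span_lmult:
  fixes c :: "'b::ring"
  assumes "y \<in> add_span G" "\<And>g. g \<in> G \<Longrightarrow> c * g \<in> add_span H"
  shows "c * y \<in> add_span H"
  using assms by (induction rule: add_span.induct) (simp_all add: add_span.add_span_zero add_span.add_span_add add_span.add_span_neg distrib_left)

lemma add_span_rmult:
  fixes c :: "'b::ring"
  assumes "y \<in> add_span G" "\<And>g. g \<in> G \<Longrightarrow> g * c \<in> add_span H"
  shows "y * c \<in> add_span H"
  using assms by (induction rule: add_span.induct) (simp_all add: add_span.add_span_zero add_span.add_span_add add_span.add_span_neg distrib_right)

lemma set_prod_intro: "x \<in> X \<Longrightarrow> y \<in> Y \<Longrightarrow> x * y \<in> set_prod X Y"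
  unfolding set_prod_def by (rule add_span.intros(1)) blast

lemma decomp_left:
  fixes Bg :: "int \<Rightarrow> 'b::ring set" and G :: "'b set" and P :: "int \<Rightarrow> 'b \<Rightarrow> bool"
  assumes gr: "Z_graded Bg" and gen: "subring_gen G = UNIV"
    and Gcl: "\<And>g. g \<in> G \<Longrightarrow> \<exists>d. g \<in> Bg d \<and> (\<forall>j z. z \<in> Bg j \<longrightarrow> P j z \<longrightarrow> P (d + j) (g * z))"
    and e: "e \<in> Bg 0" "P 0 e" "\<And>x. x * e = x"
    and P0: "\<And>d. P d 0"
    and Padd: "\<And>d x y. x \<in> Bg d \<Longrightarrow> y \<in> Bg d \<Longrightarrow> P d x \<Longrightarrow> P d y \<Longrightarrow> P d (x+y)"
    and Pneg: "\<And>d x. x \<in> Bg d \<Longrightarrow> P d x \<Longrightarrow> P d (-x)"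
    and x: "x \<in> Bg k"
  shows "P k x"
proof -
  define H where "H = add_span {z. \<exists>d. z \<in> Bg d \<and> P d z}"
  have s1: "g * y \<in> H" if g: "g \<in> G" and y: "y \<in> H" for g y
  proof -
    obtain d where d: "g \<in> Bg d" "\<forall>j z. z \<in> Bg j \<longrightarrow> P j z \<longrightarrow> P (d+j) (g*z)" using Gcl g by blast
    show ?thesis unfolding H_def
      by (rule add_span_lmult[OF y[unfolded H_def]]) (auto intro!: add_span.intros(1) Zg_mult[OF gr] d(1) simp: d(2))
  qed
  have s2: "x * y \<in> H" if "x \<in> subring_gen G" "y \<in> H" for x y
    using that
  proof (induction arbitrary: y rule: subring_gen.induct)
    case (subring_gen_gen x) then show ?case using s1 by blast
  next
    case subring_gen_zero then show ?case by (simp add: H_def add_span.intros(2))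
  next
    case (subring_gen_add x y z) then show ?case by (simp add: H_def distrib_right add_span.intros(3))
  next
    case (subring_gen_neg x y) then show ?case by (simp add: H_def add_span.intros(4))
  next
    case (subring_gen_mult x y z) then show ?case by (simp add: mult.assoc)
  qed
  have eH: "e \<in> H" unfolding H_def using e by (blast intro: add_span.intros(1))
  have xH: "x \<in> H" using s2[OF _ eH, of x] gen e(3)[of x] by simp
  have s4: "\<exists>c F. finite F \<and> (\<forall>i. c i \<in> Bg i \<and> P i (c i)) \<and> (\<forall>i. i \<notin> F \<longrightarrow> c i = 0) \<and> y = sum c F"
    if "y \<in> H" for y
    using that unfolding H_def
  proof (induction rule: add_span.induct)
    case (add_span_gen z)
    then obtain d where d: "z \<in> Bg d" "P d z" by blast
    show ?case
      by (rule exI[of _ "\<lambda>i. if i = d then z else 0"], rule exI[of _ "{d}"])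
         (auto simp: d P0 Zg_zero[OF gr])
  next
    case add_span_zero
    show ?case by (rule exI[of _ "\<lambda>i. 0"], rule exI[of _ "{}"]) (auto simp: P0 Zg_zero[OF gr])
  next
    case (add_span_add x y)
    from add_span_add.IH(1) obtain c1 F1 where h1: "finite F1" "\<forall>i. c1 i \<in> Bg i \<and> P i (c1 i)" "\<forall>i. i \<notin> F1 \<longrightarrow> c1 i = 0" "x = sum c1 F1"
      by blast
    from add_span_add.IH(2) obtain c2 F2 where h2: 
      "finite F2" "\<forall>i. c2 i \<in> Bg i \<and> P i (c2 i)" "\<forall>i. i \<notin> F2 \<longrightarrow> c2 i = 0" "y = sum c2 F2" by blast
    note h = h1 h2
    have "sum c1 F1 = sum c1 (F1 \<union> F2)" by (rule sum.mono_neutral_left) (use h in auto)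
    moreover have "sum c2 F2 = sum c2 (F1 \<union> F2)" by (rule sum.mono_neutral_left) (use h in auto)
    ultimately have "x + y = sum (\<lambda>i. c1 i + c2 i) (F1 \<union> F2)" using h by (simp add: sum.distrib)
    then show ?case
    proof (intro exI[of _ "\<lambda>i. c1 i + c2 i"] exI[of _ "F1 \<union> F2"] conjI allI impI)
      fix i show "c1 i + c2 i \<in> Bg i" using h Zg_add[OF gr] by blast
      show "P i (c1 i + c2 i)" using h by (intro Padd) auto
    next show "finite (F1 \<union> F2)" using h by simp
    next fix i assume "i \<notin> F1 \<union> F2" then show "c1 i + c2 i = 0" using h by simp
    next show "x + y = (\<Sum>i\<in>F1 \<union> F2. c1 i + c2 i)" by fact
    qed
  next
    case (add_span_neg x)
    then obtain c F where h: "finite F" "\<forall>i. c i \<in> Bg i \<and> P i (c i)" "\<forall>i. i \<notin> F \<longrightarrow> c i = 0" "x = sum c F" by blast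
    then show ?case
    proof (intro exI[of _ "\<lambda>i. - c i"] exI[of _ F] conjI allI impI)
      fix i show "- c i \<in> Bg i" using h Zg_neg[OF gr] by blast
      show "P i (- c i)" using h by (intro Pneg) auto
    next show "finite F" using h by simp
    next fix i assume "i \<notin> F" then show "- c i = 0" using h by simp
    next show "- x = (\<Sum>i\<in>F. - c i)" using h by (simp add: sum_negf)
    qed
  qed
  obtain c F where h: "finite F" "\<forall>i. c i \<in> Bg i \<and> P i (c i)" "\<forall>i. i \<notin> F \<longrightarrow> c i = 0" "x = sum c F"
    using s4[OF xH] by blast
  define c' where "c' = (\<lambda>i. c i - (if i = k then x else 0))"
  have sub: "{i. c' i \<noteq> 0} \<subseteq> insert k F" using h(3) unfolding c'_def by auto
  have fin: "finite {i. c' i \<noteq> 0}" using h(1) by (rule finite_subset[OF sub, simplified])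
  have cb: "c' i \<in> Bg i" for i
  proof -
    have a: "c i \<in> Bg i" using h(2) by blast
    have b: "- (if i = k then x else 0) \<in> Bg i" using x Zg_neg[OF gr] Zg_zero[OF gr] by simp
    show ?thesis unfolding c'_def diff_conv_add_uminus by (rule Zg_add[OF gr a b])
  qed
  have "sum c' {i. c' i \<noteq> 0} = sum c' (insert k F)"
    by (rule sum.mono_neutral_left) (use h(1) sub in auto)
  also have "\<dots> = sum c (insert k F) - sum (\<lambda>i. if i = k then x else 0) (insert k F)"
    unfolding c'_def by (simp add: sum_subtractf)
  also have "\<dots> = 0"
  proof -
    have "sum c (insert k F) = sum c F" by (rule sum.mono_neutral_right) (use h in auto)
    moreover have "sum (\<lambda>i. if i = k then x else 0) (insert k F) = x" using h(1) by simp
    ultimately show ?thesis using h(4) by simp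
  qed
  finally have "c' k = 0" using Zg_unique[OF gr fin cb] by blast
  then have "c k = x" unfolding c'_def by simp
  then show ?thesis using h(2) by metis
qed

lemma decomp_right:
  fixes Bg :: "int \<Rightarrow> 'b::ring set" and G :: "'b set" and P :: "int \<Rightarrow> 'b \<Rightarrow> bool"
  assumes gr: "Z_graded Bg" and gen: "subring_gen G = UNIV"
    and Gcl: "\<And>g. g \<in> G \<Longrightarrow> \<exists>d. g \<in> Bg d \<and> (\<forall>j z. z \<in> Bg j \<longrightarrow> P j z \<longrightarrow> P (j + d) (z * g))"
    and e: "e \<in> Bg 0" "P 0 e" "\<And>x. e * x = x"
    and P0: "\<And>d. P d 0"
    and Padd: "\<And>d x y. x \<in> Bg d \<Longrightarrow> y \<in> Bg d \<Longrightarrow> P d x \<Longrightarrow> P d y \<Longrightarrow> P d (x+y)"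
    and Pneg: "\<And>d x. x \<in> Bg d \<Longrightarrow> P d x \<Longrightarrow> P d (-x)"
    and x: "x \<in> Bg k"
  shows "P k x"
proof -
  define H where "H = add_span {z. \<exists>d. z \<in> Bg d \<and> P d z}"
  have s1: "y * g \<in> H" if g: "g \<in> G" and y: "y \<in> H" for g y
  proof -
    obtain d where d: "g \<in> Bg d" "\<forall>j z. z \<in> Bg j \<longrightarrow> P j z \<longrightarrow> P (j+d) (z*g)" using Gcl g by blast
    show ?thesis unfolding H_def
      by (rule add_span_rmult[OF y[unfolded H_def]]) (auto intro!: add_span.intros(1) Zg_mult[OF gr] d(1) simp: d(2))
  qed
  have s2: "y * x \<in> H" if "x \<in> subring_gen G" "y \<in> H" for x y
    using that
  proof (induction arbitrary: y rule: subring_gen.induct)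
    case (subring_gen_gen x) then show ?case using s1 by blast
  next
    case subring_gen_zero then show ?case by (simp add: H_def add_span.intros(2))
  next
    case (subring_gen_add x y z) then show ?case by (simp add: H_def distrib_left add_span.intros(3))
  next
    case (subring_gen_neg x y) then show ?case by (simp add: H_def add_span.intros(4))
  next
    case (subring_gen_mult x y z) then show ?case by (simp flip: mult.assoc)
  qed
  have eH: "e \<in> H" unfolding H_def using e by (blast intro: add_span.intros(1))
  have xH: "x \<in> H" using s2[OF _ eH, of x] gen e(3)[of x] by simp
  have s4: "\<exists>c F. finite F \<and> (\<forall>i. c i \<in> Bg i \<and> P i (c i)) \<and> (\<forall>i. i \<notin> F \<longrightarrow> c i = 0) \<and> y = sum c F"
    if "y \<in> H" for y
    using that unfolding H_def
  proof (induction rule: add_span.induct)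
    case (add_span_gen z)
    then obtain d where d: "z \<in> Bg d" "P d z" by blast
    show ?case
      by (rule exI[of _ "\<lambda>i. if i = d then z else 0"], rule exI[of _ "{d}"])
         (auto simp: d P0 Zg_zero[OF gr])
  next
    case add_span_zero
    show ?case by (rule exI[of _ "\<lambda>i. 0"], rule exI[of _ "{}"]) (auto simp: P0 Zg_zero[OF gr])
  next
    case (add_span_add x y)
    from add_span_add.IH(1) obtain c1 F1 where h1: "finite F1" "\<forall>i. c1 i \<in> Bg i \<and> P i (c1 i)" "\<forall>i. i \<notin> F1 \<longrightarrow> c1 i = 0" "x = sum c1 F1"
      by blast
    from add_span_add.IH(2) obtain c2 F2 where h2: 
      "finite F2" "\<forall>i. c2 i \<in> Bg i \<and> P i (c2 i)" "\<forall>i. i \<notin> F2 \<longrightarrow> c2 i = 0" "y = sum c2 F2" by blast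
    note h = h1 h2
    have "sum c1 F1 = sum c1 (F1 \<union> F2)" by (rule sum.mono_neutral_left) (use h in auto)
    moreover have "sum c2 F2 = sum c2 (F1 \<union> F2)" by (rule sum.mono_neutral_left) (use h in auto)
    ultimately have "x + y = sum (\<lambda>i. c1 i + c2 i) (F1 \<union> F2)" using h by (simp add: sum.distrib)
    then show ?case
    proof (intro exI[of _ "\<lambda>i. c1 i + c2 i"] exI[of _ "F1 \<union> F2"] conjI allI impI)
      fix i show "c1 i + c2 i \<in> Bg i" using h Zg_add[OF gr] by blast
      show "P i (c1 i + c2 i)" using h by (intro Padd) auto
    next show "finite (F1 \<union> F2)" using h by simp
    next fix i assume "i \<notin> F1 \<union> F2" then show "c1 i + c2 i = 0" using h by simp
    next show "x + y = (\<Sum>i\<in>F1 \<union> F2. c1 i + c2 i)" by fact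
    qed
  next
    case (add_span_neg x)
    then obtain c F where h: "finite F" "\<forall>i. c i \<in> Bg i \<and> P i (c i)" "\<forall>i. i \<notin> F \<longrightarrow> c i = 0" "x = sum c F" by blast
    then show ?case
    proof (intro exI[of _ "\<lambda>i. - c i"] exI[of _ F] conjI allI impI)
      fix i show "- c i \<in> Bg i" using h Zg_neg[OF gr] by blast
      show "P i (- c i)" using h by (intro Pneg) auto
    next show "finite F" using h by simp
    next fix i assume "i \<notin> F" then show "- c i = 0" using h by simp
    next show "- x = (\<Sum>i\<in>F. - c i)" using h by (simp add: sum_negf)
    qed
  qed
  obtain c F where h: "finite F" "\<forall>i. c i \<in> Bg i \<and> P i (c i)" "\<forall>i. i \<notin> F \<longrightarrow> c i = 0" "x = sum c F"
    using s4[OF xH] by blast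
  define c' where "c' = (\<lambda>i. c i - (if i = k then x else 0))"
  have sub: "{i. c' i \<noteq> 0} \<subseteq> insert k F" using h(3) unfolding c'_def by auto
  have fin: "finite {i. c' i \<noteq> 0}" using h(1) by (rule finite_subset[OF sub, simplified])
  have cb: "c' i \<in> Bg i" for i
  proof -
    have a: "c i \<in> Bg i" using h(2) by blast
    have b: "- (if i = k then x else 0) \<in> Bg i" using x Zg_neg[OF gr] Zg_zero[OF gr] by simp
    show ?thesis unfolding c'_def diff_conv_add_uminus by (rule Zg_add[OF gr a b])
  qed
  have "sum c' {i. c' i \<noteq> 0} = sum c' (insert k F)"
    by (rule sum.mono_neutral_left) (use h(1) sub in auto)
  also have "\<dots> = sum c (insert k F) - sum (\<lambda>i. if i = k then x else 0) (insert k F)"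
    unfolding c'_def by (simp add: sum_subtractf)
  also have "\<dots> = 0"
  proof -
    have "sum c (insert k F) = sum c F" by (rule sum.mono_neutral_right) (use h in auto)
    moreover have "sum (\<lambda>i. if i = k then x else 0) (insert k F) = x" using h(1) by simp
    ultimately show ?thesis using h(4) by simp
  qed
  finally have "c' k = 0" using Zg_unique[OF gr fin cb] by blast
  then have "c k = x" unfolding c'_def by simp
  then show ?thesis using h(2) by metis
qed




primrec Wset :: "('q \<Rightarrow> 'b::ring) \<Rightarrow> nat \<Rightarrow> 'b set" where
  "Wset T 0 = UNIV"
| "Wset T (Suc k) = set_prod (range T) (Wset T k)"

primrec Vset :: "('p \<Rightarrow> 'b::ring) \<Rightarrow> nat \<Rightarrow> 'b set" where
  "Vset S 0 = UNIV"
| "Vset S (Suc k) = set_prod (Vset S k) (range S)"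

lemma set_prod_zero: "0 \<in> set_prod X Y"
  unfolding set_prod_def by (rule add_span.intros(2))
lemma set_prod_add: "x \<in> set_prod X Y \<Longrightarrow> y \<in> set_prod X Y \<Longrightarrow> x + y \<in> set_prod X Y"
  unfolding set_prod_def by (rule add_span.intros(3))
lemma set_prod_neg: "x \<in> set_prod X Y \<Longrightarrow> - x \<in> set_prod X Y"
  unfolding set_prod_def by (rule add_span.intros(4))

lemma set_prod_induct[consumes 1, case_names gen zero add neg]:
  assumes "a \<in> set_prod X Y"
    and "\<And>x y. x \<in> X \<Longrightarrow> y \<in> Y \<Longrightarrow> Q (x * y)"
    and "Q 0" and "\<And>a b. Q a \<Longrightarrow> Q b \<Longrightarrow> Q (a + b)" and "\<And>a. Q a \<Longrightarrow> Q (- a)"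
  shows "Q a"
  using assms(1) unfolding set_prod_def
  by (induction rule: add_span.induct) (use assms(2-) in auto)

lemma set_prod_sandwich:
  fixes l r :: "'b::ring"
  assumes "a \<in> set_prod X Y" "\<And>x. x \<in> X \<Longrightarrow> l * x \<in> X'" "\<And>y. y \<in> Y \<Longrightarrow> y * r \<in> Y'"
  shows "l * a * r \<in> set_prod X' Y'"
  using assms(1)
proof (induction rule: set_prod_induct)
  case (gen x y)
  have "l * (x * y) * r = (l * x) * (y * r)" by (simp add: mult.assoc)
  then show ?case using gen assms(2,3) set_prod_intro by metis
next
  case zero then show ?case by (simp add: set_prod_zero)
next
  case (add a b) then show ?case by (simp add: distrib_left distrib_right set_prod_add)
next
  case (neg a) then show ?case by (simp add: set_prod_neg)
qed

lemma W_zero: "0 \<in> Wset T k" by (cases k) (auto simp: set_prod_zero)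
lemma W_add: "x \<in> Wset T k \<Longrightarrow> y \<in> Wset T k \<Longrightarrow> x + y \<in> Wset T k" by (cases k) (auto simp: set_prod_add)
lemma W_neg: "x \<in> Wset T k \<Longrightarrow> - x \<in> Wset T k" by (cases k) (auto simp: set_prod_neg)
lemma V_zero: "0 \<in> Vset T k" by (cases k) (auto simp: set_prod_zero)
lemma V_add: "x \<in> Vset T k \<Longrightarrow> y \<in> Vset T k \<Longrightarrow> x + y \<in> Vset T k" by (cases k) (auto simp: set_prod_add)
lemma V_neg: "x \<in> Vset T k \<Longrightarrow> - x \<in> Vset T k" by (cases k) (auto simp: set_prod_neg)

locale cps =
  fixes lP :: "'r::ring_1 \<Rightarrow> 'p::ab_group_add \<Rightarrow> 'p" and rP :: "'p \<Rightarrow> 'r \<Rightarrow> 'p"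
    and lQ :: "'r \<Rightarrow> 'q::ab_group_add \<Rightarrow> 'q" and rQ :: "'q \<Rightarrow> 'r \<Rightarrow> 'q"
    and \<psi> :: "'p \<Rightarrow> 'q \<Rightarrow> 'r"
    and S :: "'p \<Rightarrow> 'b::ring" and T :: "'q \<Rightarrow> 'b" and \<sigma> :: "'r \<Rightarrow> 'b"
    and Bg :: "int \<Rightarrow> 'b set"
  assumes S_add: "S (p + p') = S p + S p'"
    and T_add: "T (q + q') = T q + T q'"
    and sig_mult: "\<sigma> (a * b) = \<sigma> a * \<sigma> b"
    and S_r: "S (rP p a) = S p * \<sigma> a" and S_l: "S (lP a p) = \<sigma> a * S p"
    and T_r: "T (rQ q a) = T q * \<sigma> a" and T_l: "T (lQ a q) = \<sigma> a * T q"
    and sig_psi: "\<sigma> (\<psi> p q) = S p * T q"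
    and lP1: "lP 1 p = p" and rP1: "rP p 1 = p" and lQ1: "lQ 1 q = q" and rQ1: "rQ q 1 = q"
    and gen: "subring_gen (range \<sigma> \<union> range S \<union> range T) = UNIV"
    and gr: "Z_graded Bg"
    and sig0: "\<sigma> a \<in> Bg 0" and T1: "T q \<in> Bg 1" and Sm1: "S p \<in> Bg (-1)"
    and units: "has_unit (set_prod (Bg (- int k)) (Bg (int k)))"
    and FS: "condition_FS' lP rQ \<psi>"
begin

lemma T0: "T 0 = 0" using T_add[of 0 0] by simp
lemma Tneg: "T (- q) = - T q" using T_add[of q "-q"] T0 by (simp add: add_eq_0_iff)
lemma S0: "S 0 = 0" using S_add[of 0 0] by simp
lemma Sneg: "S (- q) = - S q" using S_add[of q "-q"] S0 by (simp add: add_eq_0_iff)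

lemma one_l: "\<sigma> 1 * x = x"
proof -
  have "x \<in> subring_gen (range \<sigma> \<union> range S \<union> range T)" using gen by simp
  then show ?thesis
  proof (induction rule: subring_gen.induct)
    case (subring_gen_gen x)
    then show ?case
    proof (elim UnE imageE)
      fix r assume "x = \<sigma> r" then show ?thesis by (simp flip: sig_mult)
    next
      fix p assume "x = S p" then show ?thesis by (metis S_l lP1)
    next
      fix q assume "x = T q" then show ?thesis by (metis T_l lQ1)
    qed
  qed (simp_all add: distrib_left flip: mult.assoc)
qed

lemma one_r: "x * \<sigma> 1 = x"
proof -
  have "x \<in> subring_gen (range \<sigma> \<union> range S \<union> range T)" using gen by simp
  then show ?thesis
  proof (induction rule: subring_gen.induct)
    case (subring_gen_gen x)
    then show ?case
    proof (elim UnE imageE)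
      fix r assume "x = \<sigma> r" then show ?thesis by (simp flip: sig_mult)
    next
      fix p assume "x = S p" then show ?thesis by (metis S_r rP1)
    next
      fix q assume "x = T q" then show ?thesis by (metis T_r rQ1)
    qed
  qed (simp_all add: distrib_right mult.assoc)
qed

lemma W_sigma: "w \<in> Wset T k \<Longrightarrow> \<sigma> r * w \<in> Wset T k"
proof (induction k arbitrary: w)
  case 0 then show ?case by simp
next
  case (Suc k)
  show ?case using Suc.prems unfolding Wset.simps set_prod_def
  proof (rule add_span_lmult)
    fix g assume "g \<in> {x * y |x y. x \<in> range T \<and> y \<in> Wset T k}"
    then obtain q y where g: "g = T q * y" "y \<in> Wset T k" by blast
    have "\<sigma> r * g = T (lQ r q) * y" using g by (simp add: T_l mult.assoc)
    then show "\<sigma> r * g \<in> add_span {x * y |x y. x \<in> range T \<and> y \<in> Wset T k}"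
      using g(2) by (simp, intro add_span.intros(1)) blast
  qed
qed

lemma W_T: "w \<in> Wset T k \<Longrightarrow> T q * w \<in> Wset T (Suc k)"
  by (simp add: set_prod_intro)

lemma W_S: "w \<in> Wset T (Suc k) \<Longrightarrow> S p * w \<in> Wset T k"
proof -
  assume w: "w \<in> Wset T (Suc k)"
  have "S p * w \<in> add_span (Wset T k)"
    using w unfolding Wset.simps set_prod_def
  proof (rule add_span_lmult)
    fix g assume "g \<in> {x * y |x y. x \<in> range T \<and> y \<in> Wset T k}"
    then obtain q y where g: "g = T q * y" "y \<in> Wset T k" by blast
    have "S p * g = \<sigma> (\<psi> p q) * y" using g by (simp add: sig_psi mult.assoc)
    then show "S p * g \<in> add_span (Wset T k)" using W_sigma[OF g(2)] by (simp add: add_span.intros(1))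
  qed
  then show ?thesis
    by (induction rule: add_span.induct) (auto intro: W_zero W_add W_neg)
qed

lemma V_sigma: "w \<in> Vset S k \<Longrightarrow> w * \<sigma> r \<in> Vset S k"
proof (induction k arbitrary: w)
  case 0 then show ?case by simp
next
  case (Suc k)
  show ?case using Suc.prems unfolding Vset.simps set_prod_def
  proof (rule add_span_rmult)
    fix g assume "g \<in> {x * y |x y. x \<in> Vset S k \<and> y \<in> range S}"
    then obtain p y where g: "g = y * S p" "y \<in> Vset S k" by blast
    have "g * \<sigma> r = y * S (rP p r)" using g by (simp add: S_r mult.assoc)
    then show "g * \<sigma> r \<in> add_span {x * y |x y. x \<in> Vset S k \<and> y \<in> range S}"
      using g(2) by (simp, intro add_span.intros(1)) blast
  qed
qed

lemma V_S: "w \<in> Vset S k \<Longrightarrow> w * S p \<in> Vset S (Suc k)"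
  by (simp add: set_prod_intro)

lemma V_T: "w \<in> Vset S (Suc k) \<Longrightarrow> w * T q \<in> Vset S k"
proof -
  assume w: "w \<in> Vset S (Suc k)"
  have "w * T q \<in> add_span (Vset S k)"
    using w unfolding Vset.simps set_prod_def
  proof (rule add_span_rmult)
    fix g assume "g \<in> {x * y |x y. x \<in> Vset S k \<and> y \<in> range S}"
    then obtain p y where g: "g = y * S p" "y \<in> Vset S k" by blast
    have "g * T q = y * \<sigma> (\<psi> p q)" using g by (simp add: sig_psi mult.assoc)
    then show "g * T q \<in> add_span (Vset S k)" using V_sigma[OF g(2)] by (simp add: add_span.intros(1))
  qed
  then show ?thesis
    by (induction rule: add_span.induct) (auto intro: V_zero V_add V_neg)
qed


lemma posW: "x \<in> Bg d \<Longrightarrow> int k \<le> d \<Longrightarrow> x \<in> Wset T k"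
proof -
  assume x: "x \<in> Bg d" and k: "int k \<le> d"
  have "(\<lambda>d x. \<forall>k. int k \<le> d \<longrightarrow> x \<in> Wset T k) d x"
  proof (rule decomp_left[OF gr gen _ sig0[of 1] _ one_r _ _ _ x])
    fix g assume "g \<in> range \<sigma> \<union> range S \<union> range T"
    then show "\<exists>d. g \<in> Bg d \<and> (\<forall>j z. z \<in> Bg j \<longrightarrow> (\<forall>k. int k \<le> j \<longrightarrow> z \<in> Wset T k)
                 \<longrightarrow> (\<forall>k. int k \<le> d + j \<longrightarrow> g * z \<in> Wset T k))"
    proof (elim UnE imageE)
      fix r assume "g = \<sigma> r" then show ?thesis using sig0 W_sigma by (intro exI[of _ 0]) auto
    next
      fix p assume g: "g = S p"
      show ?thesis
      proof (intro exI[of _ "-1"] conjI allI impI)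
        show "g \<in> Bg (-1)" using g Sm1 by simp
        fix j z k assume h: "\<forall>k. int k \<le> j \<longrightarrow> z \<in> Wset T k" "int k \<le> -1 + j"
        have "int (Suc k) \<le> j" using h(2) by simp
        then have "z \<in> Wset T (Suc k)" using h(1) by blast
        then show "g * z \<in> Wset T k" using g W_S by simp
      qed
    next
      fix q assume g: "g = T q"
      show ?thesis
      proof (intro exI[of _ "1"] conjI allI impI)
        show "g \<in> Bg 1" using g T1 by simp
        fix j z k assume h: "\<forall>k. int k \<le> j \<longrightarrow> z \<in> Wset T k" "int k \<le> 1 + j"
        show "g * z \<in> Wset T k"
        proof (cases k)
          case 0 then show ?thesis by simp
        next
          case (Suc m) then have "z \<in> Wset T m" using h by auto
          then show ?thesis using g W_T Suc by simp
        qed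
      qed
    qed
  next
    show "\<forall>k. int k \<le> 0 \<longrightarrow> \<sigma> 1 \<in> Wset T k" by auto
  qed (auto intro: W_zero W_add W_neg)
  then show ?thesis using k by simp
qed

lemma negV: "x \<in> Bg d \<Longrightarrow> int k \<le> - d \<Longrightarrow> x \<in> Vset S k"
proof -
  assume x: "x \<in> Bg d" and k: "int k \<le> - d"
  have "(\<lambda>d x. \<forall>k. int k \<le> - d \<longrightarrow> x \<in> Vset S k) d x"
  proof (rule decomp_right[OF gr gen _ sig0[of 1] _ one_l _ _ _ x])
    fix g assume "g \<in> range \<sigma> \<union> range S \<union> range T"
    then show "\<exists>d. g \<in> Bg d \<and> (\<forall>j z. z \<in> Bg j \<longrightarrow> (\<forall>k. int k \<le> - j \<longrightarrow> z \<in> Vset S k)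
                 \<longrightarrow> (\<forall>k. int k \<le> - (j + d) \<longrightarrow> z * g \<in> Vset S k))"
    proof (elim UnE imageE)
      fix r assume "g = \<sigma> r" then show ?thesis using sig0 V_sigma by (intro exI[of _ 0]) auto
    next
      fix q assume g: "g = T q"
      show ?thesis
      proof (intro exI[of _ "1"] conjI allI impI)
        show "g \<in> Bg 1" using g T1 by simp
        fix j z k assume h: "\<forall>k. int k \<le> - j \<longrightarrow> z \<in> Vset S k" "int k \<le> - (j + 1)"
        have "int (Suc k) \<le> - j" using h(2) by simp
        then have "z \<in> Vset S (Suc k)" using h(1) by blast
        then show "z * g \<in> Vset S k" using g V_T by simp
      qed
    next
      fix p assume g: "g = S p"
      show ?thesis
      proof (intro exI[of _ "-1"] conjI allI impI)
        show "g \<in> Bg (-1)" using g Sm1 by simp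
        fix j z k assume h: "\<forall>k. int k \<le> - j \<longrightarrow> z \<in> Vset S k" "int k \<le> - (j + -1)"
        show "z * g \<in> Vset S k"
        proof (cases k)
          case 0 then show ?thesis by simp
        next
          case (Suc m) then have "z \<in> Vset S m" using h by auto
          then show ?thesis using g V_S Suc by simp
        qed
      qed
    qed
  next
    show "\<forall>k. int k \<le> - 0 \<longrightarrow> \<sigma> 1 \<in> Vset S k" by auto
  qed (auto intro: V_zero V_add V_neg)
  then show ?thesis using k by simp
qed

definition "TS = add_span {T q * S p | q p. True}"

lemma TS_zero: "0 \<in> TS" unfolding TS_def by (rule add_span.intros(2))
lemma TS_add: "x \<in> TS \<Longrightarrow> y \<in> TS \<Longrightarrow> x + y \<in> TS" unfolding TS_def by (rule add_span.intros(3))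
lemma TS_neg: "x \<in> TS \<Longrightarrow> - x \<in> TS" unfolding TS_def by (rule add_span.intros(4))
lemma TS_gen: "T q * S p \<in> TS" unfolding TS_def by (rule add_span.intros(1)) blast

lemma uT: "\<exists>u\<in>TS. \<forall>x. u * T x = T x"
proof -
  obtain \<Theta> where th: "\<Theta> \<in> F_P_Q rQ \<psi>" "\<forall>q. \<Theta> q = q" using FS unfolding condition_FS'_def by blast
  have "\<exists>u\<in>TS. \<forall>x. u * T x = T (f x)" if "f \<in> F_P_Q rQ \<psi>" for f
    using that unfolding F_P_Q_def
  proof (induction rule: fun_span.induct)
    case (fun_span_gen f)
    then obtain q p where f: "f = (\<lambda>x. rQ q (\<psi> p x))" by blast
    show ?case
      by (rule bexI[of _ "T q * S p"]) (simp_all add: f T_r sig_psi mult.assoc TS_gen)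
  next
    case fun_span_zero then show ?case using TS_zero T0 by (intro bexI[of _ 0]) simp_all
  next
    case (fun_span_add f g)
    then obtain u1 u2 where "u1 \<in> TS" "\<forall>x. u1 * T x = T (f x)" "u2 \<in> TS" "\<forall>x. u2 * T x = T (g x)" by blast
    then show ?case by (intro bexI[of _ "u1 + u2"]) (simp_all add: distrib_right T_add TS_add)
  next
    case (fun_span_neg f)
    then obtain u1 where "u1 \<in> TS" "\<forall>x. u1 * T x = T (f x)" by blast
    then show ?case by (intro bexI[of _ "- u1"]) (simp_all add: Tneg TS_neg)
  qed
  from this[OF th(1)] show ?thesis using th(2) by simp
qed

lemma vS: "\<exists>v\<in>TS. \<forall>y. S y * v = S y"
proof -
  obtain \<Phi> where ph: "\<Phi> \<in> F_Q_P lP \<psi>" "\<forall>p. \<Phi> p = p" using FS unfolding condition_FS'_def by blast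
  have "\<exists>v\<in>TS. \<forall>y. S y * v = S (f y)" if "f \<in> F_Q_P lP \<psi>" for f
    using that unfolding F_Q_P_def
  proof (induction rule: fun_span.induct)
    case (fun_span_gen f)
    then obtain q p where f: "f = (\<lambda>y. lP (\<psi> y q) p)" by blast
    show ?case
      by (rule bexI[of _ "T q * S p"]) (simp_all add: f S_l sig_psi mult.assoc TS_gen)
  next
    case fun_span_zero then show ?case using TS_zero S0 by (intro bexI[of _ 0]) simp_all
  next
    case (fun_span_add f g)
    then obtain u1 u2 where "u1 \<in> TS" "\<forall>x. S x * u1 = S (f x)" "u2 \<in> TS" "\<forall>x. S x * u2 = S (g x)" by blast
    then show ?case by (intro bexI[of _ "u1 + u2"]) (simp_all add: distrib_left S_add TS_add)
  next
    case (fun_span_neg f)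
    then obtain u1 where "u1 \<in> TS" "\<forall>x. S x * u1 = S (f x)" by blast
    then show ?case by (intro bexI[of _ "- u1"]) (simp_all add: Sneg TS_neg)
  qed
  from this[OF ph(1)] show ?thesis using ph(2) by simp
qed


lemma aW: "\<exists>a \<in> set_prod (Bg (int k)) (Bg (- int k)). \<forall>w \<in> Wset T k. a * w = w"
proof (induction k)
  case 0
  have "\<sigma> 1 * \<sigma> 1 \<in> set_prod (Bg (int 0)) (Bg (- int 0))" using set_prod_intro[OF sig0 sig0] by simp
  then show ?case by (intro bexI[of _ "\<sigma> 1 * \<sigma> 1"]) (simp_all add: one_l)
next
  case (Suc k)
  then obtain ak where ak: "ak \<in> set_prod (Bg (int k)) (Bg (- int k))" "\<forall>w\<in>Wset T k. ak * w = w" by blast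
  obtain u where u: "u \<in> TS" "\<forall>x. u * T x = T x" using uT by blast
  have key: "\<exists>a' \<in> set_prod (Bg (int (Suc k))) (Bg (- int (Suc k))).
      \<forall>q w. w \<in> Wset T k \<longrightarrow> a' * (T q * w) = v * (T q * w)" if "v \<in> TS" for v
    using that unfolding TS_def
  proof (induction rule: add_span.induct)
    case (add_span_gen v)
    then obtain q p where v: "v = T q * S p" by blast
    have mem: "T q * ak * S p \<in> set_prod (Bg (int (Suc k))) (Bg (- int (Suc k)))"
    proof (rule set_prod_sandwich[OF ak(1)])
      fix x assume "x \<in> Bg (int k)"
      then have "T q * x \<in> Bg (1 + int k)" using Zg_mult[OF gr T1] by blast
      then show "T q * x \<in> Bg (int (Suc k))" by simp
    next
      fix y assume "y \<in> Bg (- int k)"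
      then have "y * S p \<in> Bg (- int k + -1)" using Zg_mult[OF gr _ Sm1] by blast
      moreover have "- int k + -1 = - int (Suc k)" by simp
      ultimately show "y * S p \<in> Bg (- int (Suc k))" by metis
    qed
    show ?case
    proof (rule bexI[OF _ mem], intro allI impI)
      fix q' w assume w: "w \<in> Wset T k"
      have "T q * ak * S p * (T q' * w) = T q * (ak * (\<sigma> (\<psi> p q') * w))" by (simp add: sig_psi mult.assoc)
      also have "\<dots> = T q * (\<sigma> (\<psi> p q') * w)" using ak(2) W_sigma[OF w] by simp
      also have "\<dots> = v * (T q' * w)" by (simp add: v sig_psi mult.assoc)
      finally show "T q * ak * S p * (T q' * w) = v * (T q' * w)" .
    qed
  next
    case add_span_zero
    show ?case by (intro bexI[of _ 0]) (simp_all add: set_prod_zero)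
  next
    case (add_span_add x y)
    then obtain a1 a2 where "a1 \<in> set_prod (Bg (int (Suc k))) (Bg (- int (Suc k)))"
      "\<forall>q w. w \<in> Wset T k \<longrightarrow> a1 * (T q * w) = x * (T q * w)"
      "a2 \<in> set_prod (Bg (int (Suc k))) (Bg (- int (Suc k)))"
      "\<forall>q w. w \<in> Wset T k \<longrightarrow> a2 * (T q * w) = y * (T q * w)" by blast
    then show ?case by (intro bexI[of _ "a1 + a2"]) (simp_all add: distrib_right set_prod_add)
  next
    case (add_span_neg x)
    then obtain a1 where "a1 \<in> set_prod (Bg (int (Suc k))) (Bg (- int (Suc k)))"
      "\<forall>q w. w \<in> Wset T k \<longrightarrow> a1 * (T q * w) = x * (T q * w)" by blast
    then show ?case by (intro bexI[of _ "- a1"]) (simp_all add: set_prod_neg)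
  qed
  obtain a' where a': "a' \<in> set_prod (Bg (int (Suc k))) (Bg (- int (Suc k)))"
    "\<forall>q w. w \<in> Wset T k \<longrightarrow> a' * (T q * w) = u * (T q * w)" using key[OF u(1)] by blast
  show ?case
  proof (rule bexI[OF _ a'(1)], intro ballI)
    fix w assume "w \<in> Wset T (Suc k)"
    then have "w \<in> set_prod (range T) (Wset T k)" by simp
    then show "a' * w = w"
    proof (induction rule: set_prod_induct)
      case (gen x y)
      then obtain q where "x = T q" by blast
      then show ?case using a'(2) gen u(2) by (simp flip: mult.assoc)
    qed (simp_all add: distrib_left)
  qed
qed

lemma bV: "\<exists>b \<in> set_prod (Bg (int k)) (Bg (- int k)). \<forall>w \<in> Vset S k. w * b = w"
proof (induction k)
  case 0
  have "\<sigma> 1 * \<sigma> 1 \<in> set_prod (Bg (int 0)) (Bg (- int 0))" using set_prod_intro[OF sig0 sig0] by simp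
  then show ?case by (intro bexI[of _ "\<sigma> 1 * \<sigma> 1"]) (simp_all add: one_r mult.assoc flip: mult.assoc)
next
  case (Suc k)
  then obtain bk where bk: "bk \<in> set_prod (Bg (int k)) (Bg (- int k))" "\<forall>w\<in>Vset S k. w * bk = w" by blast
  obtain u where u: "u \<in> TS" "\<forall>x. S x * u = S x" using vS by blast
  have key: "\<exists>a' \<in> set_prod (Bg (int (Suc k))) (Bg (- int (Suc k))).
      \<forall>p w. w \<in> Vset S k \<longrightarrow> (w * S p) * a' = (w * S p) * v" if "v \<in> TS" for v
    using that unfolding TS_def
  proof (induction rule: add_span.induct)
    case (add_span_gen v)
    then obtain q p where v: "v = T q * S p" by blast
    have mem: "T q * bk * S p \<in> set_prod (Bg (int (Suc k))) (Bg (- int (Suc k)))"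
    proof (rule set_prod_sandwich[OF bk(1)])
      fix x assume "x \<in> Bg (int k)"
      then have "T q * x \<in> Bg (1 + int k)" using Zg_mult[OF gr T1] by blast
      then show "T q * x \<in> Bg (int (Suc k))" by simp
    next
      fix y assume "y \<in> Bg (- int k)"
      then have "y * S p \<in> Bg (- int k + -1)" using Zg_mult[OF gr _ Sm1] by blast
      moreover have "- int k + -1 = - int (Suc k)" by simp
      ultimately show "y * S p \<in> Bg (- int (Suc k))" by metis
    qed
    show ?case
    proof (rule bexI[OF _ mem], intro allI impI)
      fix p' w assume w: "w \<in> Vset S k"
      have "(w * S p') * (T q * bk * S p) = ((w * \<sigma> (\<psi> p' q)) * bk) * S p" by (simp add: sig_psi mult.assoc)
      also have "\<dots> = (w * \<sigma> (\<psi> p' q)) * S p" using bk(2) V_sigma[OF w] by simp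
      also have "\<dots> = (w * S p') * v" by (simp add: v sig_psi mult.assoc)
      finally show "(w * S p') * (T q * bk * S p) = (w * S p') * v" .
    qed
  next
    case add_span_zero
    show ?case by (intro bexI[of _ 0]) (simp_all add: set_prod_zero)
  next
    case (add_span_add x y)
    then obtain a1 a2 where "a1 \<in> set_prod (Bg (int (Suc k))) (Bg (- int (Suc k)))"
      "\<forall>p w. w \<in> Vset S k \<longrightarrow> (w * S p) * a1 = (w * S p) * x"
      "a2 \<in> set_prod (Bg (int (Suc k))) (Bg (- int (Suc k)))"
      "\<forall>p w. w \<in> Vset S k \<longrightarrow> (w * S p) * a2 = (w * S p) * y" by blast
    then show ?case by (intro bexI[of _ "a1 + a2"]) (simp_all add: distrib_left set_prod_add)
  next
    case (add_span_neg x)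
    then obtain a1 where "a1 \<in> set_prod (Bg (int (Suc k))) (Bg (- int (Suc k)))"
      "\<forall>p w. w \<in> Vset S k \<longrightarrow> (w * S p) * a1 = (w * S p) * x" by blast
    then show ?case by (intro bexI[of _ "- a1"]) (simp_all add: set_prod_neg)
  qed
  obtain a' where a': "a' \<in> set_prod (Bg (int (Suc k))) (Bg (- int (Suc k)))"
    "\<forall>p w. w \<in> Vset S k \<longrightarrow> (w * S p) * a' = (w * S p) * u" using key[OF u(1)] by blast
  show ?case
  proof (rule bexI[OF _ a'(1)], intro ballI)
    fix w assume "w \<in> Vset S (Suc k)"
    then have "w \<in> set_prod (Vset S k) (range S)" by simp
    then show "w * a' = w"
    proof (induction rule: set_prod_induct)
      case (gen x y)
      then obtain p where "y = S p" by blast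
      then show ?case using a'(2) gen u(2) by (simp add: mult.assoc)
    qed (simp_all add: distrib_right)
  qed
qed

lemma esg: "epsilon_strongly_graded Bg"
  unfolding epsilon_strongly_graded_def
proof (intro conjI gr allI)
  fix i :: int
  show "\<exists>a\<in>set_prod (Bg i) (Bg (- i)). \<exists>b\<in>set_prod (Bg (- i)) (Bg i). \<forall>x\<in>Bg i. a * x = x \<and> x * b = x"
  proof (cases "i \<ge> 0")
    case True
    define d where "d = nat i"
    have i: "i = int d" using True unfolding d_def by simp
    obtain e where e: "e \<in> set_prod (Bg (- int d)) (Bg (int d))"
      "\<forall>x\<in>set_prod (Bg (- int d)) (Bg (int d)). e * x = x \<and> x * e = x"
      using units[of d] unfolding has_unit_def by blast
    obtain a where a: "a \<in> set_prod (Bg (int d)) (Bg (- int d))" "\<forall>w \<in> Wset T d. a * w = w"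
      using aW by blast
    show ?thesis unfolding i
    proof (rule bexI[OF _ a(1)], rule bexI[OF _ e(1)], intro ballI conjI)
      fix x assume x: "x \<in> Bg (int d)"
      then have xw: "x \<in> Wset T d" using posW by blast
      then show ax: "a * x = x" using a(2) by blast
      have "a * x * e = a * x" using a(1)
      proof (induction rule: set_prod_induct)
        case (gen x' y)
        have "y * x \<in> set_prod (Bg (- int d)) (Bg (int d))" using set_prod_intro gen(2) x by blast
        then have "y * x * e = y * x" using e(2) by blast
        then show ?case by (simp add: mult.assoc)
      qed (simp_all add: distrib_right)
      then show "x * e = x" using ax by simp
    qed
  next
    case False
    define d where "d = nat (- i)"
    have i: "i = - int d" using False unfolding d_def by simp
    obtain e where e: "e \<in> set_prod (Bg (- int d)) (Bg (int d))"
      "\<forall>x\<in>set_prod (Bg (- int d)) (Bg (int d)). e * x = x \<and> x * e = x"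
      using units[of d] unfolding has_unit_def by blast
    obtain b where b: "b \<in> set_prod (Bg (int d)) (Bg (- int d))" "\<forall>w \<in> Vset S d. w * b = w"
      using bV by blast
    show ?thesis unfolding i minus_minus
    proof (rule bexI[OF _ e(1)], rule bexI[OF _ b(1)], intro ballI conjI)
      fix x assume x: "x \<in> Bg (- int d)"
      then have xv: "x \<in> Vset S d" using negV by simp
      then show bx: "x * b = x" using b(2) by blast
      have "e * (x * b) = x * b" using b(1)
      proof (induction rule: set_prod_induct)
        case (gen x' y)
        have "x * x' \<in> set_prod (Bg (- int d)) (Bg (int d))" using set_prod_intro gen(1) x by blast
        then have "e * (x * x') = x * x'" using e(2) by blast
        then show ?case by (simp flip: mult.assoc)
      qed (simp_all add: distrib_left)
      then show "e * x = x" using bx by simp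
    qed
  qed
qed

end

theorem mainTheorem9:
  fixes lP :: "'r::ring_1 \<Rightarrow> 'p::ab_group_add \<Rightarrow> 'p" and rP :: "'p \<Rightarrow> 'r \<Rightarrow> 'p"
    and lQ :: "'r \<Rightarrow> 'q::ab_group_add \<Rightarrow> 'q" and rQ :: "'q \<Rightarrow> 'r \<Rightarrow> 'q"
    and \<psi> :: "'p \<Rightarrow> 'q \<Rightarrow> 'r"
    and S :: "'p \<Rightarrow> 'b::ring" and T :: "'q \<Rightarrow> 'b" and \<sigma> :: "'r \<Rightarrow> 'b"
    and Bg :: "int \<Rightarrow> 'b set"
  assumes "unital_R_system lP rP lQ rQ \<psi>"
    and "semi_full_rep lP rP lQ rQ \<psi> S T \<sigma> Bg"
    and "condition_FS' lP rQ \<psi>"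
    and "\<forall>k. has_unit (I_psi_sigma Bg \<sigma> rP \<psi> k)"
  shows "epsilon_strongly_graded Bg"
proof -
  have u1: "\<forall>x. lP 1 x = x" "\<forall>x. rP x 1 = x" "\<forall>x. lQ 1 x = x" "\<forall>x. rQ x 1 = x"
    using assms(1) unfolding unital_R_system_def unital_bimodule_def by blast+
  have g: "graded_covariant_rep lP rP lQ rQ \<psi> S T \<sigma> Bg"
    and sf: "\<forall>k::nat. set_prod (Bg (- int k)) (Bg (int k)) = I_psi_sigma Bg \<sigma> rP \<psi> k"
    using assms(2) unfolding semi_full_rep_def by blast+
  have c: "covariant_rep lP rP lQ rQ \<psi> S T \<sigma>" and gen: "subring_gen (range \<sigma> \<union> range S \<union> range T) = UNIV"
    and gr: "Z_graded Bg" and rg: "range \<sigma> \<subseteq> Bg 0" "range T \<subseteq> Bg 1" "range S \<subseteq> Bg (-1)"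
    using g unfolding graded_covariant_rep_def by blast+
  have un: "has_unit (set_prod (Bg (- int k)) (Bg (int k)))" for k using sf assms(4) by simp
  interpret cps lP rP lQ rQ \<psi> S T \<sigma> Bg
  proof
    show "subring_gen (range \<sigma> \<union> range S \<union> range T) = UNIV" by (rule gen)
    show "Z_graded Bg" by (rule gr)
    show "condition_FS' lP rQ \<psi>" by (rule assms(3))
    show "has_unit (set_prod (Bg (- int k)) (Bg (int k)))" for k by (rule un)
  qed (use c u1 rg in \<open>unfold covariant_rep_def\<close>; fast)+
  show ?thesis by (rule esg)
qed

end
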